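(* Let $\mathcal{O}$ be an oriented matroid on $E$, let $f,g,h\in E$ be pairwise distinct, and let $X,Y$ be comodular cocircuits with $X_g=Y_g\neq 0$ and $X_f=Y_f\neq 0$. If $X\leftrightarrow_{g,f}Y$, then $X\to_{g,h}Y$ implies $X\to_{f,h}Y$.
   Context: Oriented matroid $\mathcal{O}$ of rank $r$ on finite $E$, given by its cocircuits (sign vectors in $\{+,-,0\}^E$). Notation: $z(X)$ zero set, $\operatorname{sep}(X,Y)=\{e:X_e=-Y_e\neq 0\}$, composition $(X\circ Y)_e=X_e$ if $X_e\ne0$, else $Y_e$. An edge is a covector whose zero set is a flat of rank $r-2$; cocircuits $X\neq\pm Y$ are comodular if $X\circ Y$ is an edge. For comodular $X,Y$ and $e\in\operatorname{sep}(X,Y)$, cocircuit elimination of $e$ between $X$ and $Y$ yields the unique cocircuit $Z$ with $Z_e=0$ and $Z_h=(X\circ Y)_h$ for $h\notin\operatorname{sep}(X,Y)$. For distinct $a,b\in E$ and comodular $X,Y$ with $X_a=Y_a\ne0$, let $Z$ be obtained by eliminating $a$ between $-X$ and $Y$; write $X\to_{a,b}Y$ if $Z_b=+$, $X\leftarrow_{a,b}Y$ if $Z_b=-$, $X\leftrightarrow_{a,b}Y$ if $Z_b=0$. *)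

theory Defs
  imports Main
begin

(* Signs and sign vectors.  A sign vector on the ground set E is a function
   'a => sign that vanishes outside E. *)
datatype sign = SPos | SNeg | SZero

fun sneg :: "sign \<Rightarrow> sign" where
  "sneg SPos = SNeg" | "sneg SNeg = SPos" | "sneg SZero = SZero"

type_synonym 'a svec = "'a \<Rightarrow> sign"

definition vneg :: "'a svec \<Rightarrow> 'a svec" where
  "vneg X = (\<lambda>e. sneg (X e))"

definition zvec :: "'a svec" where
  "zvec = (\<lambda>e. SZero)"

definition supp :: "'a svec \<Rightarrow> 'a set" where
  "supp X = {e. X e \<noteq> SZero}"

definition posp :: "'a svec \<Rightarrow> 'a set" where
  "posp X = {e. X e = SPos}"

definition negp :: "'a svec \<Rightarrow> 'a set" where
  "negp X = {e. X e = SNeg}"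

definition zero_set :: "'a set \<Rightarrow> 'a svec \<Rightarrow> 'a set" where
  "zero_set E X = {e \<in> E. X e = SZero}"

definition sep :: "'a svec \<Rightarrow> 'a svec \<Rightarrow> 'a set" where
  "sep X Y = {e. X e \<noteq> SZero \<and> X e = sneg (Y e)}"

definition comp :: "'a svec \<Rightarrow> 'a svec \<Rightarrow> 'a svec" where
  "comp X Y = (\<lambda>e. if X e \<noteq> SZero then X e else Y e)"

(* Cocircuit axioms of an oriented matroid on the finite set E
   (Bjorner-Las Vergnas-Sturmfels-White-Ziegler, Def. 3.2.1 dualised). *)
definition om_cocircuits :: "'a set \<Rightarrow> 'a svec set \<Rightarrow> bool" where
  "om_cocircuits E C \<longleftrightarrow>
     finite E \<and>
     (\<forall>X\<in>C. \<forall>e. e \<notin> E \<longrightarrow> X e = SZero) \<and>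
     zvec \<notin> C \<and>
     (\<forall>X\<in>C. vneg X \<in> C) \<and>
     (\<forall>X\<in>C. \<forall>Y\<in>C. supp X \<subseteq> supp Y \<longrightarrow> X = Y \<or> X = vneg Y) \<and>
     (\<forall>X\<in>C. \<forall>Y\<in>C. \<forall>e. X \<noteq> vneg Y \<and> e \<in> sep X Y \<longrightarrow>
        (\<exists>Z\<in>C. Z e = SZero \<and> posp Z \<subseteq> posp X \<union> posp Y
                 \<and> negp Z \<subseteq> negp X \<union> negp Y))"

inductive_set covectors :: "'a svec set \<Rightarrow> 'a svec set" for C where
  cov_zero: "zvec \<in> covectors C"
| cov_comp: "X \<in> C \<Longrightarrow> Y \<in> covectors C \<Longrightarrow> comp X Y \<in> covectors C"

(* Underlying matroid M: its cocircuits are the supports of the signed cocircuits.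
   Independent sets of the dual M^* are the sets containing no cocircuit support;
   rank of M^*, then rank of M via r(A) = |A| + r^*(E - A) - r^*(E). *)
definition coindep :: "'a svec set \<Rightarrow> 'a set \<Rightarrow> bool" where
  "coindep C B \<longleftrightarrow> \<not> (\<exists>X\<in>C. supp X \<subseteq> B)"

definition dual_rank :: "'a svec set \<Rightarrow> 'a set \<Rightarrow> nat" where
  "dual_rank C A = Max {card B | B. B \<subseteq> A \<and> coindep C B}"

definition mrank :: "'a set \<Rightarrow> 'a svec set \<Rightarrow> 'a set \<Rightarrow> nat" where
  "mrank E C A = card A + dual_rank C (E - A) - dual_rank C E"

definition om_rank :: "'a set \<Rightarrow> 'a svec set \<Rightarrow> nat" where
  "om_rank E C = mrank E C E"

definition is_edge :: "'a set \<Rightarrow> 'a svec set \<Rightarrow> 'a svec \<Rightarrow> bool" where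
  "is_edge E C W \<longleftrightarrow> W \<in> covectors C \<and> mrank E C (zero_set E W) + 2 = om_rank E C"

definition comodular :: "'a set \<Rightarrow> 'a svec set \<Rightarrow> 'a svec \<Rightarrow> 'a svec \<Rightarrow> bool" where
  "comodular E C X Y \<longleftrightarrow> X \<in> C \<and> Y \<in> C \<and> X \<noteq> Y \<and> X \<noteq> vneg Y \<and> is_edge E C (comp X Y)"

definition elim :: "'a svec set \<Rightarrow> 'a svec \<Rightarrow> 'a svec \<Rightarrow> 'a \<Rightarrow> 'a svec" where
  "elim C X Y e = (THE Z. Z \<in> C \<and> Z e = SZero \<and> (\<forall>h. h \<notin> sep X Y \<longrightarrow> Z h = comp X Y h))"

definition arrow_setting :: "'a set \<Rightarrow> 'a svec set \<Rightarrow> 'a \<Rightarrow> 'a \<Rightarrow> 'a svec \<Rightarrow> 'a svec \<Rightarrow> bool" where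
  "arrow_setting E C a b X Y \<longleftrightarrow> a \<in> E \<and> b \<in> E \<and> a \<noteq> b \<and> comodular E C X Y
      \<and> X a = Y a \<and> X a \<noteq> SZero"

definition arr_right :: "'a set \<Rightarrow> 'a svec set \<Rightarrow> 'a \<Rightarrow> 'a \<Rightarrow> 'a svec \<Rightarrow> 'a svec \<Rightarrow> bool" where
  "arr_right E C a b X Y \<longleftrightarrow> arrow_setting E C a b X Y \<and> elim C (vneg X) Y a b = SPos"

definition arr_left :: "'a set \<Rightarrow> 'a svec set \<Rightarrow> 'a \<Rightarrow> 'a \<Rightarrow> 'a svec \<Rightarrow> 'a svec \<Rightarrow> bool" where
  "arr_left E C a b X Y \<longleftrightarrow> arrow_setting E C a b X Y \<and> elim C (vneg X) Y a b = SNeg"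

definition arr_both :: "'a set \<Rightarrow> 'a svec set \<Rightarrow> 'a \<Rightarrow> 'a \<Rightarrow> 'a svec \<Rightarrow> 'a svec \<Rightarrow> bool" where
  "arr_both E C a b X Y \<longleftrightarrow> arrow_setting E C a b X Y \<and> elim C (vneg X) Y a b = SZero"

end

theory Submission imports Defs begin

lemma sneg_sneg[simp]: "sneg (sneg s) = s" by (cases s) auto
lemma sneg_zero_iff[simp]: "(sneg s = SZero) = (s = SZero)" by (cases s) auto
lemma vneg_vneg[simp]: "vneg (vneg X) = X" by (simp add: vneg_def)
lemma vneg_app[simp]: "vneg X e = sneg (X e)" by (simp add: vneg_def)
lemma supp_vneg[simp]: "supp (vneg X) = supp X" by (simp add: supp_def)
lemma in_supp: "e \<in> supp X \<longleftrightarrow> X e \<noteq> SZero" by (simp add: supp_def)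

lemma conf_supp:
  assumes "posp Z \<subseteq> posp A \<union> posp B" "negp Z \<subseteq> negp A \<union> negp B"
  shows "supp Z \<subseteq> supp A \<union> supp B"
proof
  fix h assume "h \<in> supp Z"
  then have "Z h = SPos \<or> Z h = SNeg" by (cases "Z h") (auto simp: supp_def)
  then show "h \<in> supp A \<union> supp B" using assms by (auto simp: supp_def posp_def negp_def)
qed

lemma coindep_subset: "coindep C B \<Longrightarrow> A \<subseteq> B \<Longrightarrow> coindep C A"
  by (auto simp: coindep_def)

context
  fixes E :: "'a set" and C :: "'a svec set"
  assumes om: "om_cocircuits E C"
begin

lemma om_fin: "finite E" using om by (simp add: om_cocircuits_def)
lemma om_out: "X \<in> C \<Longrightarrow> e \<notin> E \<Longrightarrow> X e = SZero" using om by (simp add: om_cocircuits_def)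
lemma om_zvec: "zvec \<notin> C" using om by (simp add: om_cocircuits_def)
lemma om_neg: "X \<in> C \<Longrightarrow> vneg X \<in> C" using om by (simp add: om_cocircuits_def)
lemma om_supp: "X \<in> C \<Longrightarrow> Y \<in> C \<Longrightarrow> supp X \<subseteq> supp Y \<Longrightarrow> X = Y \<or> X = vneg Y"
  using om by (simp add: om_cocircuits_def)
lemma om_elim: "X \<in> C \<Longrightarrow> Y \<in> C \<Longrightarrow> X \<noteq> vneg Y \<Longrightarrow> e \<in> sep X Y \<Longrightarrow>
   \<exists>Z\<in>C. Z e = SZero \<and> posp Z \<subseteq> posp X \<union> posp Y \<and> negp Z \<subseteq> negp X \<union> negp Y"
  using om unfolding om_cocircuits_def by blast

lemma supp_E: "X \<in> C \<Longrightarrow> supp X \<subseteq> E" using om_out by (auto simp: supp_def)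
lemma supp_fin: "X \<in> C \<Longrightarrow> finite (supp X)" using supp_E om_fin finite_subset by blast

lemma coindep_empty: "coindep C {}"
proof -
  have "supp Z \<subseteq> {} \<Longrightarrow> Z = zvec" for Z by (auto simp: supp_def zvec_def)
  then show ?thesis using om_zvec by (auto simp: coindep_def)
qed

lemma elim_supp:
  assumes "Z1 \<in> C" "Z2 \<in> C" "supp Z1 \<noteq> supp Z2" "x \<in> supp Z1" "x \<in> supp Z2"
  shows "\<exists>Z3\<in>C. supp Z3 \<subseteq> (supp Z1 \<union> supp Z2) - {x}"
proof (cases "Z1 x = sneg (Z2 x)")
  case True
  have "Z1 \<noteq> vneg Z2" using assms(3) by auto
  moreover have "x \<in> sep Z1 Z2" using True assms(4) by (auto simp: sep_def supp_def)
  ultimately obtain Z where "Z \<in> C" "Z x = SZero" "posp Z \<subseteq> posp Z1 \<union> posp Z2" "negp Z \<subseteq> negp Z1 \<union> negp Z2"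
    using om_elim assms by blast
  then show ?thesis using conf_supp[of Z Z1 Z2] by (auto simp: supp_def)
next
  case False
  have "Z1 \<noteq> vneg (vneg Z2)" using assms(3) by auto
  moreover have "x \<in> sep Z1 (vneg Z2)" using False assms(4,5)
    by (cases "Z1 x"; cases "Z2 x") (auto simp: sep_def supp_def)
  moreover have "vneg Z2 \<in> C" using om_neg assms by auto
  ultimately obtain Z where "Z \<in> C" "Z x = SZero" "posp Z \<subseteq> posp Z1 \<union> posp (vneg Z2)" "negp Z \<subseteq> negp Z1 \<union> negp (vneg Z2)"
    using om_elim assms by blast
  then show ?thesis using conf_supp[of Z Z1 "vneg Z2"] by (auto simp: supp_def)
qed

lemma aug:
  assumes fin1: "finite I1" and fin2: "finite I2" and c1: "coindep C I1" and c2: "coindep C I2"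
    and lt: "card I1 < card I2"
  shows "\<exists>e\<in>I2 - I1. coindep C (insert e I1)"
proof (rule ccontr)
  assume H: "\<not> ?thesis"
  define Q where "Q = (\<lambda>I3. I3 \<subseteq> I1 \<union> I2 \<and> coindep C I3 \<and> card I1 < card I3)"
  have "Q I2" using c2 lt by (auto simp: Q_def)
  then obtain I3 where Q3: "Q I3" and min: "\<And>I. Q I \<Longrightarrow> card (I1 - I3) \<le> card (I1 - I)"
    using ex_has_least_nat[of Q I2 "\<lambda>I. card (I1 - I)"] by blast
  have ci3: "coindep C I3" and l3: "card I1 < card I3" and s3: "I3 \<subseteq> I1 \<union> I2"
    using Q3 by (auto simp: Q_def)
  have fin3: "finite I3" using s3 fin1 fin2 by (meson finite_Un finite_subset)
  obtain f0 where f0: "f0 \<in> I3" "f0 \<notin> I1"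
  proof -
    have "\<not> I3 \<subseteq> I1"
    proof
      assume "I3 \<subseteq> I1" then have "card I3 \<le> card I1" using card_mono[OF fin1] by blast
      then show False using l3 by simp
    qed
    then show ?thesis using that by blast
  qed
  have "I1 - I3 \<noteq> {}"
  proof
    assume "I1 - I3 = {}"
    then have "insert f0 I1 \<subseteq> I3" using f0 by auto
    then have "coindep C (insert f0 I1)" using ci3 coindep_subset by blast
    moreover have "f0 \<in> I2 - I1" using f0 s3 by auto
    ultimately show False using H by blast
  qed
  then obtain e where e: "e \<in> I1" "e \<notin> I3" by blast
  have key: "\<exists>Z\<in>C. supp Z \<subseteq> insert e (I3 - {f})" if f: "f \<in> I3" "f \<notin> I1" for f
  proof -
    let ?T = "insert e (I3 - {f})"
    have c0: "card I3 > 0" using fin3 f card_gt_0_iff by blast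
    have "card ?T = Suc (card (I3 - {f}))" using fin3 e by (simp add: card_insert_if)
    also have "card (I3 - {f}) = card I3 - 1" using f by (simp add: card_Diff_singleton)
    finally have cardT: "card ?T = card I3" using c0 by simp
    have "I1 - ?T = (I1 - I3) - {e}" using f e by auto
    moreover have "card ((I1 - I3) - {e}) < card (I1 - I3)"
      using fin1 e by (intro card_Diff1_less) auto
    ultimately have "\<not> Q ?T" using min[of ?T] by auto
    moreover have "?T \<subseteq> I1 \<union> I2" using s3 e by auto
    ultimately have "\<not> coindep C ?T" using cardT l3 by (auto simp: Q_def)
    then show ?thesis by (auto simp: coindep_def)
  qed
  obtain Z0 where Z0: "Z0 \<in> C" "supp Z0 \<subseteq> insert e (I3 - {f0})" using key f0 by blast
  have eZ0: "e \<in> supp Z0"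
  proof (rule ccontr)
    assume "e \<notin> supp Z0"
    then have "supp Z0 \<subseteq> I3" using Z0 by auto
    then show False using ci3 Z0 by (auto simp: coindep_def)
  qed
  have "\<not> supp Z0 \<subseteq> I1" using c1 Z0 by (auto simp: coindep_def)
  then obtain g where g: "g \<in> supp Z0" "g \<notin> I1" by blast
  then have gI3: "g \<in> I3" using Z0 e by auto
  obtain Zg where Zg: "Zg \<in> C" "supp Zg \<subseteq> insert e (I3 - {g})" using key gI3 g by blast
  have eZg: "e \<in> supp Zg"
  proof (rule ccontr)
    assume "e \<notin> supp Zg"
    then have "supp Zg \<subseteq> I3" using Zg by auto
    then show False using ci3 Zg by (auto simp: coindep_def)
  qed
  have "g \<notin> supp Zg" using Zg e gI3 by auto
  then have "supp Z0 \<noteq> supp Zg" using g by auto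
  then obtain Z3 where "Z3 \<in> C" "supp Z3 \<subseteq> (supp Z0 \<union> supp Zg) - {e}"
    using elim_supp[OF Z0(1) Zg(1) _ eZ0 eZg] by blast
  moreover have "(supp Z0 \<union> supp Zg) - {e} \<subseteq> I3" using Z0 Zg by auto
  ultimately show False using ci3 unfolding coindep_def by blast
qed

lemma max_ext:
  assumes "finite D" "coindep C I" "I \<subseteq> D"
  shows "\<exists>J. I \<subseteq> J \<and> J \<subseteq> D \<and> coindep C J \<and> (\<forall>x\<in>D - J. \<not> coindep C (insert x J))"
proof -
  define P where "P = (\<lambda>J. I \<subseteq> J \<and> J \<subseteq> D \<and> coindep C J)"
  have "P I" using assms by (auto simp: P_def)
  then obtain J where PJ: "P J" and m: "\<And>J'. P J' \<Longrightarrow> card D - card J \<le> card D - card J'"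
    using ex_has_least_nat[of P I "\<lambda>J. card D - card J"] by blast
  have "\<forall>x\<in>D - J. \<not> coindep C (insert x J)"
  proof (intro ballI notI)
    fix x assume x: "x \<in> D - J" and c: "coindep C (insert x J)"
    have "P (insert x J)" using PJ x c by (auto simp: P_def)
    then have "card D - card J \<le> card D - card (insert x J)" using m by blast
    moreover have "finite J" using PJ assms(1) finite_subset by (auto simp: P_def)
    moreover have "card (insert x J) \<le> card D" using x PJ assms(1) by (intro card_mono) (auto simp: P_def)
    ultimately show False using x by auto
  qed
  then show ?thesis using PJ by (auto simp: P_def)
qed

lemma max_card:
  assumes "finite D" "J \<subseteq> D" "coindep C J" "\<forall>x\<in>D - J. \<not> coindep C (insert x J)"
    "B \<subseteq> D" "coindep C B"
  shows "card B \<le> card J"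
proof (rule ccontr)
  assume "\<not> ?thesis"
  then obtain e where "e \<in> B - J" "coindep C (insert e J)"
    using aug[of J B] assms finite_subset by (metis not_le)
  then show False using assms by auto
qed

lemma two_circ:
  assumes Z: "Z1 \<in> C" "Z2 \<in> C" "supp Z1 \<noteq> supp Z2"
    and I: "I \<subseteq> supp Z1 \<union> supp Z2" "coindep C I"
  shows "card I + 2 \<le> card (supp Z1 \<union> supp Z2)"
proof (rule ccontr)
  let ?A = "supp Z1 \<union> supp Z2"
  assume "\<not> ?thesis"
  have finA: "finite ?A" using supp_fin Z by auto
  have finI: "finite I" using finA I(1) finite_subset by blast
  have "card I \<le> card ?A" using card_mono[OF finA I(1)] .
  moreover have "card (?A - I) = card ?A - card I" using card_Diff_subset[OF finI I(1)] .
  ultimately have cA: "card ?A = card I + card (?A - I)" by linarith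
  with \<open>\<not> ?thesis\<close> have c1: "card (?A - I) \<le> 1" by linarith
  have "\<not> supp Z1 \<subseteq> I" using I Z unfolding coindep_def by blast
  then obtain x where x: "x \<in> supp Z1" "x \<notin> I" by blast
  have "\<not> supp Z2 \<subseteq> I" using I Z unfolding coindep_def by blast
  then obtain y where y: "y \<in> supp Z2" "y \<notin> I" by blast
  have one: "\<And>u v. u \<in> ?A - I \<Longrightarrow> v \<in> ?A - I \<Longrightarrow> u = v"
    using c1 finA card_le_Suc0_iff_eq[of "?A - I"] by auto
  have "x = y" using one x y by auto
  then obtain Z3 where "Z3 \<in> C" "supp Z3 \<subseteq> ?A - {x}"
    using elim_supp[OF Z x(1)] y by blast
  moreover have "?A - {x} \<subseteq> I" using one x by blast
  ultimately show False using I unfolding coindep_def by blast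
qed

lemma main_lemma:
  assumes finD: "finite D" and B: "B \<subseteq> D" "coindep C B" "card D \<le> card B + 2"
    and Z: "Z1 \<in> C" "Z2 \<in> C" "Z3 \<in> C" "supp Z1 \<subseteq> D" "supp Z2 \<subseteq> D" "supp Z3 \<subseteq> D"
    and e: "e \<in> supp Z3" "e \<notin> supp Z1" "e \<notin> supp Z2"
  shows "Z1 = Z2 \<or> Z1 = vneg Z2"
proof (rule ccontr)
  assume nz: "\<not> ?thesis"
  have sd: "supp Z1 \<noteq> supp Z2"
  proof
    assume "supp Z1 = supp Z2" then show False using om_supp[OF Z(1,2)] nz by simp
  qed
  define A where "A = supp Z1 \<union> supp Z2"
  define K3 where "K3 = supp Z3"
  have finA: "finite A" using supp_fin Z by (auto simp: A_def)
  have ci: "coindep C (K3 \<inter> A)"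
    unfolding coindep_def
  proof
    assume "\<exists>X\<in>C. supp X \<subseteq> K3 \<inter> A"
    then obtain X where X: "X \<in> C" "supp X \<subseteq> K3 \<inter> A" by blast
    then have "X = Z3 \<or> X = vneg Z3" using om_supp[OF X(1) Z(3)] unfolding K3_def by blast
    then have "supp X = K3" unfolding K3_def by (metis supp_vneg)
    then show False using X e unfolding A_def K3_def by blast
  qed
  obtain I where I: "K3 \<inter> A \<subseteq> I" "I \<subseteq> A" "coindep C I" "\<forall>x\<in>A - I. \<not> coindep C (insert x I)"
    using max_ext[OF finA ci] by blast
  have AD: "A \<subseteq> D" using Z unfolding A_def by blast
  obtain J where J: "I \<subseteq> J" "J \<subseteq> D" "coindep C J" "\<forall>x\<in>D - J. \<not> coindep C (insert x J)"
    using max_ext[OF finD I(3)] I(2) AD by blast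
  have cBJ: "card B \<le> card J" using max_card[OF finD J(2,3,4) B(1,2)] .
  have JA: "J \<inter> A = I"
  proof (rule ccontr)
    assume "J \<inter> A \<noteq> I"
    moreover have "I \<subseteq> J \<inter> A" using I(2) J(1) by blast
    ultimately obtain x where x: "x \<in> J" "x \<in> A" "x \<notin> I" by blast
    have "insert x I \<subseteq> J" using x J(1) by blast
    then have "coindep C (insert x I)" using coindep_subset[OF J(3)] by blast
    then show False using I(4) x by blast
  qed
  have c2: "card I + 2 \<le> card A" unfolding A_def using two_circ[OF Z(1,2) sd I(2)[unfolded A_def] I(3)] .
  have finJ: "finite J" using J(2) finD finite_subset by blast
  have "card (D - J) = card D - card J" using J(2) finJ by (simp add: card_Diff_subset)
  then have cDJ: "card (D - J) \<le> 2" using B cBJ by linarith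
  have finI: "finite I" using finA I(2) finite_subset by blast
  have "card (A - I) = card A - card I" using card_Diff_subset[OF finI I(2)] .
  then have cAI: "card (A - I) \<ge> 2" using c2 by linarith
  have sub: "A - I \<subseteq> D - J" using JA AD by blast
  have finDJ: "finite (D - J)" using finD by auto
  have "card (A - I) \<le> card (D - J)" using card_mono[OF finDJ sub] .
  then have "card (A - I) = card (D - J)" using cAI cDJ by linarith
  then have eq: "A - I = D - J" using card_subset_eq[OF finDJ sub] by blast
  have "K3 \<subseteq> J"
  proof
    fix k assume k: "k \<in> K3"
    then have "k \<in> D" using Z(6) unfolding K3_def by blast
    show "k \<in> J"
    proof (rule ccontr)
      assume "k \<notin> J"
      then have "k \<in> A - I" using eq \<open>k \<in> D\<close> by blast
      then show False using I(1) k by blast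
    qed
  qed
  then show False using J(3) Z(3) unfolding coindep_def K3_def by blast
qed

lemma R_max:
  assumes "finite A"
  shows "\<exists>B. B \<subseteq> A \<and> coindep C B \<and> card B = dual_rank C A"
    and "B \<subseteq> A \<Longrightarrow> coindep C B \<Longrightarrow> card B \<le> dual_rank C A"
proof -
  let ?S = "{card B | B. B \<subseteq> A \<and> coindep C B}"
  have fs: "finite ?S"
  proof -
    have "?S \<subseteq> card ` Pow A" by auto
    then show ?thesis using assms finite_subset by blast
  qed
  have ne: "?S \<noteq> {}" using coindep_empty by auto
  have "dual_rank C A \<in> ?S" unfolding dual_rank_def using Max_in[OF fs ne] .
  then show "\<exists>B. B \<subseteq> A \<and> coindep C B \<and> card B = dual_rank C A" by auto
  show "B \<subseteq> A \<Longrightarrow> coindep C B \<Longrightarrow> card B \<le> dual_rank C A"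
    unfolding dual_rank_def using Max_ge[OF fs] by blast
qed

lemma edge_basis:
  assumes "is_edge E C W"
  shows "\<exists>B. B \<subseteq> E - zero_set E W \<and> coindep C B \<and> card (E - zero_set E W) \<le> card B + 2"
proof -
  let ?F = "zero_set E W"
  let ?D = "E - ?F"
  have finE: "finite E" using om_fin .
  have FE: "?F \<subseteq> E" by (auto simp: zero_set_def)
  have finD: "finite ?D" using finE by auto
  have finF: "finite ?F" using finE FE finite_subset by blast
  obtain BE where BE: "BE \<subseteq> E" "coindep C BE" "card BE = dual_rank C E" using R_max(1)[OF finE] by blast
  obtain BD where BD: "BD \<subseteq> ?D" "coindep C BD" "card BD = dual_rank C ?D" using R_max(1)[OF finD] by blast
  have r0: "dual_rank C {} = 0"
  proof -
    have "{card B | B. B \<subseteq> {} \<and> coindep C B} = {0}" using coindep_empty by auto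
    then show ?thesis unfolding dual_rank_def by simp
  qed
  have ci: "coindep C (BE \<inter> ?D)" using coindep_subset[OF BE(2), of "BE \<inter> ?D"] by simp
  have "card (BE \<inter> ?D) \<le> dual_rank C ?D"
    by (rule R_max(2)[OF finD]) (simp_all add: ci)
  moreover have "card BE \<le> card (BE \<inter> ?D) + card ?F"
  proof -
    have "BE \<subseteq> (BE \<inter> ?D) \<union> ?F" using BE(1) by blast
    moreover have "finite ((BE \<inter> ?D) \<union> ?F)" using finD finF by simp
    ultimately have "card BE \<le> card ((BE \<inter> ?D) \<union> ?F)" by (rule card_mono[rotated])
    also have "\<dots> \<le> card (BE \<inter> ?D) + card ?F" by (rule card_Un_le)
    finally show ?thesis .
  qed
  ultimately have rE: "dual_rank C E \<le> card ?F + dual_rank C ?D" using BE by linarith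
  have "card BE \<le> card E" by (rule card_mono[OF finE BE(1)])
  then have rEE: "dual_rank C E \<le> card E" using BE(3) by simp
  have "?F \<union> ?D = E" using FE by blast
  moreover have "?F \<inter> ?D = {}" by blast
  ultimately have cE: "card E = card ?F + card ?D" using card_Un_disjoint[OF finF finD] by simp
  have "mrank E C ?F + 2 = om_rank E C" using assms unfolding is_edge_def by blast
  moreover have "mrank E C ?F = card ?F + dual_rank C ?D - dual_rank C E" unfolding mrank_def by (rule refl)
  moreover have "om_rank E C = card E + dual_rank C (E - E) - dual_rank C E" unfolding om_rank_def mrank_def by (rule refl)
  ultimately have "card ?F + dual_rank C ?D - dual_rank C E + 2 = card E - dual_rank C E"
    using r0 by (simp only: Diff_cancel add_0_right)
  then have "dual_rank C ?D + 2 = card ?D" using rE rEE cE by linarith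
  then show ?thesis using BD by (metis order_refl)
qed

end

lemma sneg_inj[simp]: "(sneg a = sneg b) = (a = b)" by (cases a; cases b) auto
lemma sneg_fix: "(s = sneg s) = (s = SZero)" by (cases s) auto
lemma vneg_inj: "vneg X = vneg Y \<Longrightarrow> X = Y" by (metis vneg_vneg)

theorem proposition2p4:
  fixes E :: "'a set" and C :: "'a svec set" and f g h :: 'a and X Y :: "'a svec"
  assumes "om_cocircuits E C"
    and "f \<in> E" and "g \<in> E" and "h \<in> E"
    and "f \<noteq> g" and "g \<noteq> h" and "f \<noteq> h"
    and "comodular E C X Y"
    and "X g = Y g" and "X g \<noteq> SZero"
    and "X f = Y f" and "X f \<noteq> SZero"
    and "arr_both E C g f X Y"
  shows "arr_right E C g h X Y \<longrightarrow> arr_right E C f h X Y"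
proof
  assume ar: "arr_right E C g h X Y"
  note om = assms(1)
  have XC: "X \<in> C" and YC: "Y \<in> C" and XY: "X \<noteq> Y" and XnY: "X \<noteq> vneg Y"
    and edge: "is_edge E C (comp X Y)"
    using assms(8) unfolding comodular_def by blast+
  define W where "W = comp X Y"
  define D where "D = E - zero_set E W"
  have memD: "k \<in> D \<longleftrightarrow> k \<in> E \<and> W k \<noteq> SZero" for k
    unfolding D_def zero_set_def by blast
  have Wk: "W k = (if X k \<noteq> SZero then X k else Y k)" for k
    unfolding W_def comp_def by (rule refl)
  obtain B where B: "B \<subseteq> D" "coindep C B" "card D \<le> card B + 2"
    using edge_basis[OF om edge] unfolding D_def W_def by blast
  have finD: "finite D" using om_fin[OF om] unfolding D_def by blast
  have inE: "Z \<in> C \<Longrightarrow> Z k \<noteq> SZero \<Longrightarrow> k \<in> E" for Z k using om_out[OF om] by blast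
  have suppXD: "supp X \<subseteq> D"
  proof
    fix k assume "k \<in> supp X"
    then have "X k \<noteq> SZero" by (simp add: supp_def)
    then show "k \<in> D" using memD Wk inE[OF XC] by simp
  qed
  have suppYD: "supp Y \<subseteq> D"
  proof
    fix k assume "k \<in> supp Y"
    then have "Y k \<noteq> SZero" by (simp add: supp_def)
    then show "k \<in> D" using memD Wk inE[OF YC] by (cases "X k = SZero") simp_all
  qed
  define S where "S = sep (vneg X) Y"
  define W' where "W' = comp (vneg X) Y"
  define P where "P = (\<lambda>e Z. Z \<in> C \<and> Z e = SZero \<and> (\<forall>h. h \<notin> S \<longrightarrow> Z h = W' h))"
  have elim_eq: "elim C (vneg X) Y e = (THE Z. P e Z)" for e
    unfolding elim_def P_def S_def W'_def by (rule refl)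
  have SX: "k \<in> S \<longleftrightarrow> X k = Y k \<and> X k \<noteq> SZero" for k
    unfolding S_def sep_def by auto
  have W'k: "W' k = (if X k \<noteq> SZero then sneg (X k) else Y k)" for k
    unfolding W'_def comp_def by simp
  have PD: "supp Z \<subseteq> D" if "P e Z" for e Z
  proof
    fix k assume "k \<in> supp Z"
    then have Zk: "Z k \<noteq> SZero" by (simp add: supp_def)
    have ZC: "Z \<in> C" and ag: "\<forall>h. h \<notin> S \<longrightarrow> Z h = W' h" using that unfolding P_def by blast+
    have kE: "k \<in> E" using inE[OF ZC Zk] .
    have "X k \<noteq> SZero \<or> Y k \<noteq> SZero"
    proof (cases "k \<in> S")
      case True then show ?thesis using SX by blast
    next
      case False then have "Z k = W' k" using ag by blast
      then show ?thesis using Zk W'k[of k] by (cases "X k = SZero") simp_all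
    qed
    then show "k \<in> D" using memD kE Wk[of k] by (cases "X k = SZero") simp_all
  qed
  have exh: "\<exists>k. k \<notin> S \<and> W' k \<noteq> SZero"
  proof (rule ccontr)
    assume "\<not> ?thesis"
    then have H: "k \<notin> S \<Longrightarrow> W' k = SZero" for k by blast
    have "X = Y"
    proof
      fix k show "X k = Y k"
      proof (cases "k \<in> S")
        case True then show ?thesis using SX by blast
      next
        case False then have "W' k = SZero" using H by blast
        then show ?thesis using W'k[of k] by (cases "X k = SZero") simp_all
      qed
    qed
    then show False using XY by blast
  qed
  have uniq: "Z1 = Z2" if e: "X e = Y e" "X e \<noteq> SZero" and P1: "P e Z1" and P2: "P e Z2" for e Z1 Z2
  proof -
    have Z1C: "Z1 \<in> C" and Z2C: "Z2 \<in> C" using P1 P2 unfolding P_def by blast+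
    have eX: "e \<in> supp X" using e by (simp add: supp_def)
    have e1: "e \<notin> supp Z1" using P1 unfolding P_def supp_def by blast
    have e2: "e \<notin> supp Z2" using P2 unfolding P_def supp_def by blast
    have "Z1 = Z2 \<or> Z1 = vneg Z2"
      using main_lemma[OF om finD B Z1C Z2C XC PD[OF P1] PD[OF P2] suppXD eX e1 e2] .
    moreover have "Z1 \<noteq> vneg Z2"
    proof
      assume eq: "Z1 = vneg Z2"
      obtain k where k: "k \<notin> S" "W' k \<noteq> SZero" using exh by blast
      have "Z1 k = W' k" "Z2 k = W' k" using P1 P2 k(1) unfolding P_def by blast+
      moreover have "Z1 k = sneg (Z2 k)" using eq by simp
      ultimately have "W' k = sneg (W' k)" by simp
      then show False using k(2) sneg_fix by blast
    qed
    ultimately show ?thesis by blast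
  qed
  have ex: "\<exists>Z. P g Z"
  proof -
    have nXC: "vneg X \<in> C" using om_neg[OF om XC] .
    have ne: "vneg X \<noteq> vneg Y" using XY vneg_inj by blast
    have gsep: "g \<in> sep (vneg X) Y" using assms(9,10) unfolding sep_def by simp
    obtain Z where ZC: "Z \<in> C" and Zg: "Z g = SZero"
      and pz: "posp Z \<subseteq> posp (vneg X) \<union> posp Y" and nz: "negp Z \<subseteq> negp (vneg X) \<union> negp Y"
      using om_elim[OF om nXC YC ne gsep] by blast
    have czp: "Z k = SPos \<Longrightarrow> X k = SNeg \<or> Y k = SPos" for k
    proof -
      assume "Z k = SPos" then have "k \<in> posp Z" by (simp add: posp_def)
      then have "k \<in> posp (vneg X) \<union> posp Y" using pz by blast
      then have "sneg (X k) = SPos \<or> Y k = SPos" by (simp add: posp_def)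
      then show ?thesis by (cases "X k") simp_all
    qed
    have czn: "Z k = SNeg \<Longrightarrow> X k = SPos \<or> Y k = SNeg" for k
    proof -
      assume "Z k = SNeg" then have "k \<in> negp Z" by (simp add: negp_def)
      then have "k \<in> negp (vneg X) \<union> negp Y" using nz by blast
      then have "sneg (X k) = SNeg \<or> Y k = SNeg" by (simp add: negp_def)
      then show ?thesis by (cases "X k") simp_all
    qed
    have ZD: "supp Z \<subseteq> D"
    proof
      fix k assume "k \<in> supp Z"
      then have Zk: "Z k \<noteq> SZero" by (simp add: supp_def)
      have kE: "k \<in> E" using inE[OF ZC Zk] .
      have "X k \<noteq> SZero \<or> Y k \<noteq> SZero" using Zk czp[of k] czn[of k] by (cases "Z k") auto
      then show "k \<in> D" using memD kE Wk[of k] by (cases "X k = SZero") simp_all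
    qed
    have ZnX: "\<not> (Z = X \<or> Z = vneg X)" using Zg assms(10) by auto
    have ZnY: "\<not> (Z = Y \<or> Z = vneg Y)" using Zg assms(9,10) by auto
    have agree: "Z k = W' k" if kS: "k \<notin> S" for k
    proof -
      have hS: "\<not> (X k = Y k \<and> X k \<noteq> SZero)" using kS SX by blast
      show ?thesis
      proof (cases "X k = SZero")
        case X0: True
        show ?thesis
        proof (cases "Y k = SZero")
          case True
          then show ?thesis using X0 czp[of k] czn[of k] W'k[of k] by (cases "Z k") simp_all
        next
          case Y1: False
          have "Z k \<noteq> SZero"
          proof
            assume Zk0: "Z k = SZero"
            have "k \<in> supp Y" "k \<notin> supp Z" "k \<notin> supp X" using Y1 Zk0 X0 by (simp_all add: supp_def)
            then have "Z = X \<or> Z = vneg X"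
              using main_lemma[OF om finD B ZC XC YC ZD suppXD suppYD] by blast
            then show False using ZnX by blast
          qed
          then show ?thesis using X0 Y1 czp[of k] czn[of k] W'k[of k] by (cases "Z k") simp_all
        qed
      next
        case X1: False
        show ?thesis
        proof (cases "Y k = SZero")
          case Y0: True
          have "Z k \<noteq> SZero"
          proof
            assume Zk0: "Z k = SZero"
            have "k \<in> supp X" "k \<notin> supp Z" "k \<notin> supp Y" using Y0 Zk0 X1 by (simp_all add: supp_def)
            then have "Z = Y \<or> Z = vneg Y"
              using main_lemma[OF om finD B ZC YC XC ZD suppYD suppXD] by blast
            then show False using ZnY by blast
          qed
          then show ?thesis using X1 Y0 czp[of k] czn[of k] W'k[of k]
            by (cases "Z k"; cases "X k") simp_all
        next
          case Y1: False
          have opp: "X k = sneg (Y k)" using X1 Y1 hS by (cases "X k"; cases "Y k") simp_all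
          have "Z k \<noteq> SZero"
          proof
            assume Zk0: "Z k = SZero"
            have ksep: "k \<in> sep X Y" using opp X1 unfolding sep_def by simp
            obtain Z2 where Z2C: "Z2 \<in> C" and Z2k: "Z2 k = SZero"
              and pz2: "posp Z2 \<subseteq> posp X \<union> posp Y" and nz2: "negp Z2 \<subseteq> negp X \<union> negp Y"
              using om_elim[OF om XC YC XnY ksep] by blast
            have c2p: "Z2 j = SPos \<Longrightarrow> X j = SPos \<or> Y j = SPos" for j
              using pz2 unfolding posp_def by blast
            have c2n: "Z2 j = SNeg \<Longrightarrow> X j = SNeg \<or> Y j = SNeg" for j
              using nz2 unfolding negp_def by blast
            have Z2D: "supp Z2 \<subseteq> D"
              using conf_supp[OF pz2 nz2] suppXD suppYD by blast
            have "k \<in> supp X" "k \<notin> supp Z" "k \<notin> supp Z2" using X1 Zk0 Z2k by (simp_all add: supp_def)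
            then have "Z = Z2 \<or> Z = vneg Z2"
              using main_lemma[OF om finD B ZC Z2C XC ZD Z2D suppXD] by blast
            then show False
            proof
              assume eq: "Z = Z2"
              have "supp Z \<subseteq> supp Y"
              proof
                fix j assume "j \<in> supp Z"
                then have Zj: "Z j \<noteq> SZero" by (simp add: supp_def)
                have Z2j: "Z2 j = Z j" using eq by simp
                show "j \<in> supp Y"
                proof (rule ccontr)
                  assume "j \<notin> supp Y"
                  then have Yj: "Y j = SZero" by (simp add: supp_def)
                  show False using Zj Yj czp[of j] czn[of j] c2p[of j] c2n[of j] Z2j
                    by (cases "Z j") simp_all
                qed
              qed
              then show False using om_supp[OF om ZC YC] ZnY by blast
            next
              assume eq: "Z = vneg Z2"
              have "supp Z \<subseteq> supp X"
              proof
                fix j assume "j \<in> supp Z"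
                then have Zj: "Z j \<noteq> SZero" by (simp add: supp_def)
                have Z2j: "Z j = sneg (Z2 j)" using eq by simp
                show "j \<in> supp X"
                proof (rule ccontr)
                  assume "j \<notin> supp X"
                  then have Xj: "X j = SZero" by (simp add: supp_def)
                  show False using Zj Xj czp[of j] czn[of j] c2p[of j] c2n[of j] Z2j
                    by (cases "Z j"; cases "Z2 j") simp_all
                qed
              qed
              then show False using om_supp[OF om ZC XC] ZnX by blast
            qed
          qed
          then show ?thesis using X1 Y1 opp czp[of k] czn[of k] W'k[of k]
            by (cases "Z k"; cases "Y k") simp_all
        qed
      qed
    qed
    have "P g Z" unfolding P_def using ZC Zg agree by blast
    then show ?thesis by blast
  qed
  then obtain Zg where PZg: "P g Zg" by blast
  have eg: "elim C (vneg X) Y g = Zg"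
    unfolding elim_eq by (rule the_equality[of "P g", OF PZg]) (rule uniq[OF assms(9,10) _ PZg])
  have "elim C (vneg X) Y g f = SZero" using assms(13) unfolding arr_both_def by blast
  then have Zgf: "Zg f = SZero" using eg by simp
  have PZf: "P f Zg" using PZg Zgf unfolding P_def by blast
  have ef: "elim C (vneg X) Y f = Zg"
    unfolding elim_eq by (rule the_equality[of "P f", OF PZf]) (rule uniq[OF assms(11,12) _ PZf])
  have "elim C (vneg X) Y g h = SPos" using ar unfolding arr_right_def by blast
  then have "elim C (vneg X) Y f h = SPos" using eg ef by simp
  then show "arr_right E C f h X Y"
    unfolding arr_right_def arrow_setting_def using assms(2,4,7,8,11,12) by blast
qed

end
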